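(* Let $G$ be a profinite group. Then the following are equivalent: (i) every closed subgroup of $G$ has a closed permutable complement in $G$; (ii) every closed subgroup of $G$ has a permutable complement in $G$; (iii) every open subgroup of $G$ has a permutable complement in $G$; (iv) every open subgroup of $G$ has a closed permutable complement in $G$; (v) if $\mathcal{N}$ is a fundamental system of neighborhoods of the identity consisting of open normal subgroups of $G$, then $G/N$ is a $C$-group for every $N\in\mathcal{N}$; (vi) $G$ is an inverse limit of finite $C$-groups.
   Context: For a group $G$ and a subgroup $H\le G$, a permutable complement of $H$ in $G$ is a subgroup $K\le G$ with $G=HK$ and $H\cap K=1$. A group $G$ is a $C$-group if every subgroup of $G$ has a permutable complement in $G$. *)

theory Defs
  imports "HOL-Algebra.Algebra" "HOL-Analysis.Analysis"
begin

definition perm_complement :: "('a, 'c) monoid_scheme \<Rightarrow> 'a set \<Rightarrow> 'a set \<Rightarrow> bool" where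
  "perm_complement G H K \<longleftrightarrow>
     subgroup K G \<and> H <#>\<^bsub>G\<^esub> K = carrier G \<and> H \<inter> K = {\<one>\<^bsub>G\<^esub>}"

definition C_group :: "('a, 'c) monoid_scheme \<Rightarrow> bool" where
  "C_group G \<longleftrightarrow> group G \<and> (\<forall>H. subgroup H G \<longrightarrow> (\<exists>K. perm_complement G H K))"

definition topological_group :: "('a, 'c) monoid_scheme \<Rightarrow> 'a topology \<Rightarrow> bool" where
  "topological_group G T \<longleftrightarrow> group G \<and> topspace T = carrier G \<and>
     continuous_map (prod_topology T T) T (\<lambda>(x, y). x \<otimes>\<^bsub>G\<^esub> y) \<and>
     continuous_map T T (\<lambda>x. inv\<^bsub>G\<^esub> x)"

definition totally_disconnected_space :: "'a topology \<Rightarrow> bool" where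
  "totally_disconnected_space T \<longleftrightarrow> (\<forall>S. connectedin T S \<longrightarrow> (\<exists>a. S \<subseteq> {a}))"

definition profinite_group :: "('a, 'c) monoid_scheme \<Rightarrow> 'a topology \<Rightarrow> bool" where
  "profinite_group G T \<longleftrightarrow> topological_group G T \<and> compact_space T \<and>
     Hausdorff_space T \<and> totally_disconnected_space T"

definition inverse_system ::
  "'i set \<Rightarrow> ('i \<Rightarrow> 'i \<Rightarrow> bool) \<Rightarrow> ('i \<Rightarrow> 'b monoid) \<Rightarrow> ('i \<Rightarrow> 'i \<Rightarrow> 'b \<Rightarrow> 'b) \<Rightarrow> bool" where
  "inverse_system I leq Gs f \<longleftrightarrow>
     I \<noteq> {} \<and>
     (\<forall>i\<in>I. leq i i) \<and>
     (\<forall>i\<in>I. \<forall>j\<in>I. \<forall>k\<in>I. leq i j \<longrightarrow> leq j k \<longrightarrow> leq i k) \<and>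
     (\<forall>i\<in>I. \<forall>j\<in>I. \<exists>k\<in>I. leq i k \<and> leq j k) \<and>
     (\<forall>i\<in>I. group (Gs i)) \<and>
     (\<forall>i\<in>I. \<forall>j\<in>I. leq i j \<longrightarrow> f i j \<in> hom (Gs j) (Gs i)) \<and>
     (\<forall>i\<in>I. \<forall>x\<in>carrier (Gs i). f i i x = x) \<and>
     (\<forall>i\<in>I. \<forall>j\<in>I. \<forall>k\<in>I. leq i j \<longrightarrow> leq j k \<longrightarrow>
        (\<forall>x\<in>carrier (Gs k). f i j (f j k x) = f i k x))"

definition inv_lim_carrier ::
  "'i set \<Rightarrow> ('i \<Rightarrow> 'i \<Rightarrow> bool) \<Rightarrow> ('i \<Rightarrow> 'b monoid) \<Rightarrow> ('i \<Rightarrow> 'i \<Rightarrow> 'b \<Rightarrow> 'b) \<Rightarrow> ('i \<Rightarrow> 'b) set" where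
  "inv_lim_carrier I leq Gs f =
     {x \<in> PiE I (\<lambda>i. carrier (Gs i)). \<forall>i\<in>I. \<forall>j\<in>I. leq i j \<longrightarrow> f i j (x j) = x i}"

definition inv_lim_group ::
  "'i set \<Rightarrow> ('i \<Rightarrow> 'i \<Rightarrow> bool) \<Rightarrow> ('i \<Rightarrow> 'b monoid) \<Rightarrow> ('i \<Rightarrow> 'i \<Rightarrow> 'b \<Rightarrow> 'b) \<Rightarrow> ('i \<Rightarrow> 'b) monoid" where
  "inv_lim_group I leq Gs f =
     \<lparr>carrier = inv_lim_carrier I leq Gs f,
      monoid.mult = (\<lambda>x y. \<lambda>i\<in>I. x i \<otimes>\<^bsub>Gs i\<^esub> y i),
      monoid.one = (\<lambda>i\<in>I. \<one>\<^bsub>Gs i\<^esub>)\<rparr>"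

definition inv_lim_topology ::
  "'i set \<Rightarrow> ('i \<Rightarrow> 'i \<Rightarrow> bool) \<Rightarrow> ('i \<Rightarrow> 'b monoid) \<Rightarrow> ('i \<Rightarrow> 'i \<Rightarrow> 'b \<Rightarrow> 'b) \<Rightarrow> ('i \<Rightarrow> 'b) topology" where
  "inv_lim_topology I leq Gs f =
     subtopology (product_topology (\<lambda>i. discrete_topology (carrier (Gs i))) I)
                 (inv_lim_carrier I leq Gs f)"

definition inv_lim_of_finite_C_groups ::
  "'a monoid \<Rightarrow> 'a topology \<Rightarrow> 'i itself \<Rightarrow> 'b itself \<Rightarrow> bool" where
  "inv_lim_of_finite_C_groups G T (_::'i itself) (_::'b itself) \<longleftrightarrow>
     (\<exists>(I::'i set) leq (Gs::'i \<Rightarrow> 'b monoid) f.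
        inverse_system I leq Gs f \<and>
        (\<forall>i\<in>I. finite (carrier (Gs i)) \<and> C_group (Gs i)) \<and>
        (\<exists>\<phi>. \<phi> \<in> iso G (inv_lim_group I leq Gs f) \<and>
             homeomorphic_map T (inv_lim_topology I leq Gs f) \<phi>))"

end

theory Submission
  imports Defs
begin

locale tgrp = group G for G :: "'a monoid" (structure) +
  fixes T :: "'a topology"
  assumes prof: "profinite_group G T"
begin

lemma topsp: "topspace T = carrier G"
  using prof by (simp add: profinite_group_def topological_group_def)
lemma mult_cont: "continuous_map (prod_topology T T) T (\<lambda>(x, y). x \<otimes>\<^bsub>G\<^esub> y)"
  using prof by (simp add: profinite_group_def topological_group_def)
lemma inv_cont: "continuous_map T T (\<lambda>x. inv x)"
  using prof by (simp add: profinite_group_def topological_group_def)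
lemma compact: "compact_space T"
  using prof by (simp add: profinite_group_def)
lemma haus: "Hausdorff_space T"
  using prof by (simp add: profinite_group_def)
lemma totdisc: "totally_disconnected_space T"
  using prof by (simp add: profinite_group_def)

lemma cont_mult:
  assumes "continuous_map XX T f" "continuous_map XX T g"
  shows "continuous_map XX T (\<lambda>x. f x \<otimes> g x)"
proof -
  have "continuous_map XX (prod_topology T T) (\<lambda>x. (f x, g x))"
    using assms by (simp add: continuous_map_pairedI)
  from continuous_map_compose[OF this mult_cont] show ?thesis by (simp add: o_def)
qed

lemma cont_inv: "continuous_map XX T f \<Longrightarrow> continuous_map XX T (\<lambda>x. inv (f x))"
  using continuous_map_compose[OF _ inv_cont] by (simp add: o_def)

lemma cont_const: "g \<in> carrier G \<Longrightarrow> continuous_map XX T (\<lambda>x. g)"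
  by (simp add: topsp)

lemma cont_id: "continuous_map T T (\<lambda>x. x)"
  by simp

lemma open_pre: "continuous_map T T f \<Longrightarrow> openin T U \<Longrightarrow> openin T {x\<in>carrier G. f x \<in> U}"
  using openin_continuous_map_preimage topsp by metis

lemma closed_pre: "continuous_map T T f \<Longrightarrow> closedin T U \<Longrightarrow> closedin T {x\<in>carrier G. f x \<in> U}"
  using closedin_continuous_map_preimage topsp by metis

lemma closed_sing: "x \<in> carrier G \<Longrightarrow> closedin T {x}"
  using haus topsp by (metis Hausdorff_imp_t1_space t1_space_closedin_singleton)

lemma rcos_eq_pre:
  assumes "N \<subseteq> carrier G" "g \<in> carrier G"
  shows "N #> g = {x\<in>carrier G. x \<otimes> inv g \<in> N}"
proof safe
  fix x assume "x \<in> N #> g"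
  then obtain n where n: "n \<in> N" "x = n \<otimes> g" unfolding r_coset_def by auto
  then show "x \<in> carrier G" using assms by auto
  show "x \<otimes> inv g \<in> N" using n assms by (auto simp: m_assoc)
next
  fix x assume x: "x \<in> carrier G" "x \<otimes> inv g \<in> N"
  then have "x = (x \<otimes> inv g) \<otimes> g" using assms by (simp add: m_assoc)
  then show "x \<in> N #> g" using x unfolding r_coset_def by blast
qed

lemma open_rcos: "openin T N \<Longrightarrow> N \<subseteq> carrier G \<Longrightarrow> g \<in> carrier G \<Longrightarrow> openin T (N #> g)"
  apply (subst rcos_eq_pre, assumption+)
  apply (rule open_pre[OF cont_mult[OF cont_id cont_const]])
  by auto

lemma closed_rcos: "closedin T N \<Longrightarrow> N \<subseteq> carrier G \<Longrightarrow> g \<in> carrier G \<Longrightarrow> closedin T (N #> g)"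
  apply (subst rcos_eq_pre, assumption+)
  apply (rule closed_pre[OF cont_mult[OF cont_id cont_const]])
  by auto

lemma saturated_open:
  assumes N: "subgroup N G" "openin T N" and A: "A \<subseteq> carrier G" "\<And>a. a \<in> A \<Longrightarrow> N #> a \<subseteq> A"
  shows "openin T A"
proof (subst openin_subopen, intro ballI)
  fix a assume a: "a \<in> A"
  have ac: "a \<in> carrier G" using A(1) a by auto
  have "openin T (N #> a)" by (rule open_rcos[OF N(2) subgroup.subset[OF N(1)] ac])
  moreover have "a \<in> N #> a" by (rule rcos_self[OF ac N(1)])
  moreover have "N #> a \<subseteq> A" by (rule A(2)[OF a])
  ultimately show "\<exists>U. openin T U \<and> a \<in> U \<and> U \<subseteq> A" by blast
qed

end
context group begin
lemma inv_cancel_l: "x \<in> carrier G \<Longrightarrow> y \<in> carrier G \<Longrightarrow> inv x \<otimes> (x \<otimes> y) = y"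
  by (simp add: m_assoc[symmetric])
lemma cancel_inv_l: "x \<in> carrier G \<Longrightarrow> y \<in> carrier G \<Longrightarrow> x \<otimes> (inv x \<otimes> y) = y"
  by (simp add: m_assoc[symmetric])
end
context tgrp begin
lemma open_subgroup_closed:
  assumes N: "subgroup N G" "openin T N"
  shows "closedin T N"
proof -
  have "openin T (carrier G - N)"
  proof (rule saturated_open[OF N])
    fix a assume a: "a \<in> carrier G - N"
    show "N #> a \<subseteq> carrier G - N"
    proof
      fix x assume x: "x \<in> N #> a"
      then obtain n where n: "n \<in> N" "x = n \<otimes> a" unfolding r_coset_def by auto
      have "x \<notin> N"
      proof
        assume "x \<in> N"
        then have "inv n \<otimes> x \<in> N" using n N(1) by (simp add: subgroup.m_closed subgroup.m_inv_closed)
        moreover have "inv n \<otimes> x = a" using n a subgroup.mem_carrier[OF N(1)]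
          by (simp add: m_assoc[symmetric])
        ultimately show False using a by simp
      qed
      then show "x \<in> carrier G - N" using n a subgroup.mem_carrier[OF N(1)] by auto
    qed
  qed auto
  then show ?thesis using subgroup.subset[OF N(1)] by (simp add: closedin_def topsp)
qed

lemma clopen_nbhd:
  assumes "openin T U" "\<one> \<in> U"
  obtains V where "openin T V" "closedin T V" "\<one> \<in> V" "V \<subseteq> U"
proof -
  have "separated_between T {\<one>} (topspace T - U)"
  proof (rule cut_wire_fence_theorem_gen[OF compact])
    show "Hausdorff_space T \<or> regular_space T \<or> normal_space T" using haus by simp
    show "compactin T {\<one>}" using topsp by simp
    show "closedin T (topspace T - U)" using assms by auto
    fix C assume "connectedin T C"
    then obtain a where "C \<subseteq> {a}" using totdisc unfolding totally_disconnected_space_def by blast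
    then show "disjnt C {\<one>} \<or> disjnt C (topspace T - U)" using assms(2) by (auto simp: disjnt_def)
  qed
  then obtain V where "closedin T V" "openin T V" "{\<one>} \<subseteq> V" "topspace T - U \<subseteq> topspace T - V"
    unfolding separated_between by blast
  then show ?thesis using that openin_subset by fastforce
qed

lemma open_subgroup_in_clopen:
  assumes V: "openin T V" "closedin T V" "\<one> \<in> V"
  obtains H where "subgroup H G" "openin T H" "H \<subseteq> V"
proof -
  have Vc: "V \<subseteq> carrier G" using openin_subset[OF V(1)] topsp by simp
  let ?W = "{p \<in> topspace (prod_topology T T). (case p of (x,y) \<Rightarrow> x \<otimes> y) \<in> V}"
  have W: "openin (prod_topology T T) ?W"
    using openin_continuous_map_preimage[OF mult_cont V(1)] by simp
  have cV: "compactin T V" using closedin_compact_space[OF compact V(2)] .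
  have sub1: "V \<times> {\<one>} \<subseteq> ?W" using Vc topsp by auto
  have "\<exists>U W1. openin T U \<and> openin T W1 \<and> V \<subseteq> U \<and> \<one> \<in> W1 \<and> U \<times> W1 \<subseteq> ?W"
    by (rule tube_lemma_left[OF W cV _ sub1]) (simp add: topsp)
  then obtain U W1 where UW: "openin T U" "openin T W1" "V \<subseteq> U" "\<one> \<in> W1" "U \<times> W1 \<subseteq> ?W"
    by blast
  have VW: "v \<otimes> w \<in> V" if "v \<in> V" "w \<in> W1" for v w
  proof -
    have "(v, w) \<in> U \<times> W1" using that UW(3) by auto
    then have "(v, w) \<in> ?W" using UW(5) by (rule rev_subsetD)
    then show ?thesis by simp
  qed
  have W1c: "W1 \<subseteq> carrier G" using openin_subset[OF UW(2)] topsp by simp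
  define W2 where "W2 = {w \<in> carrier G. w \<in> W1 \<and> inv w \<in> W1}"
  have W2eq: "W2 = W1 \<inter> {w \<in> carrier G. inv w \<in> W1}" using W1c unfolding W2_def by auto
  have W2open: "openin T W2" unfolding W2eq
    by (rule openin_Int[OF UW(2) open_pre[OF inv_cont UW(2)]])
  define H where "H = {g \<in> carrier G. \<forall>v\<in>V. v \<otimes> g \<in> V \<and> v \<otimes> inv g \<in> V}"
  have sub: "subgroup H G"
  proof (rule subgroupI)
    show "H \<subseteq> carrier G" unfolding H_def by auto
    have "\<one> \<in> H" unfolding H_def using Vc by (auto simp: subsetD)
    then show "H \<noteq> {}" by blast
    fix a assume a: "a \<in> H"
    then show "inv a \<in> H" unfolding H_def by auto
    fix b assume b: "b \<in> H"
    show "a \<otimes> b \<in> H" unfolding H_def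
    proof (intro CollectI conjI ballI)
      show "a \<otimes> b \<in> carrier G" using a b unfolding H_def by auto
      fix v assume v: "v \<in> V"
      have vc: "v \<in> carrier G" using v Vc by auto
      have ac: "a \<in> carrier G" and bc: "b \<in> carrier G" using a b unfolding H_def by auto
      have "v \<otimes> a \<in> V" using a v unfolding H_def by auto
      then have "v \<otimes> a \<otimes> b \<in> V" using b unfolding H_def by auto
      then show "v \<otimes> (a \<otimes> b) \<in> V" using ac bc vc by (simp add: m_assoc)
      have "v \<otimes> inv b \<in> V" using b v unfolding H_def by auto
      then have "v \<otimes> inv b \<otimes> inv a \<in> V" using a unfolding H_def by auto
      then show "v \<otimes> inv (a \<otimes> b) \<in> V" using ac bc vc by (simp add: m_assoc inv_mult_group)
    qed
  qed
  have HV: "H \<subseteq> V"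
  proof
    fix g assume "g \<in> H"
    then have "\<one> \<otimes> g \<in> V" using V(3) unfolding H_def by auto
    then show "g \<in> V" using \<open>g \<in> H\<close> unfolding H_def by auto
  qed
  have "openin T H"
  proof (subst openin_subopen, intro ballI)
    fix g assume g: "g \<in> H"
    have gc: "g \<in> carrier G" using g unfolding H_def by auto
    let ?T = "{x\<in>carrier G. inv g \<otimes> x \<in> W2}"
    have "openin T ?T" by (rule open_pre[OF cont_mult[OF cont_const cont_id] W2open]) (use gc in auto)
    moreover have "g \<in> ?T" using gc UW(4) unfolding W2_def by auto
    moreover have "?T \<subseteq> H"
    proof
      fix x assume x: "x \<in> ?T"
      define w where "w = inv g \<otimes> x"
      have w: "w \<in> W1" "inv w \<in> W1" "w \<in> carrier G" using x unfolding w_def W2_def by auto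
      have xc: "x \<in> carrier G" using x by auto
      have xe: "x = g \<otimes> w" using gc xc unfolding w_def by (simp add: m_assoc[symmetric])
      show "x \<in> H" unfolding H_def
      proof (intro CollectI conjI ballI xc)
        fix v assume v: "v \<in> V"
        have vc: "v \<in> carrier G" using v Vc by auto
        have "v \<otimes> g \<in> V" using g v unfolding H_def by auto
        then have "v \<otimes> g \<otimes> w \<in> V" using VW w by auto
        then show "v \<otimes> x \<in> V" using xe gc w vc by (simp add: m_assoc)
        have "v \<otimes> inv w \<in> V" using VW w v by auto
        then have "v \<otimes> inv w \<otimes> inv g \<in> V" using g unfolding H_def by auto
        then show "v \<otimes> inv x \<in> V" using xe gc w vc by (simp add: m_assoc inv_mult_group)
      qed
    qed
    ultimately show "\<exists>U. openin T U \<and> g \<in> U \<and> U \<subseteq> H" by blast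
  qed
  then show ?thesis using that sub HV by blast
qed

lemma normal_core:
  assumes H: "subgroup H G" "openin T H"
  obtains N where "N \<lhd> G" "openin T N" "N \<subseteq> H"
proof -
  let ?f = "\<lambda>p. fst p \<otimes> snd p \<otimes> inv (fst p)"
  have fc: "continuous_map (prod_topology T T) T ?f"
    by (intro cont_mult cont_inv continuous_map_fst continuous_map_snd)
  let ?W = "{p \<in> topspace (prod_topology T T). ?f p \<in> H}"
  have W: "openin (prod_topology T T) ?W"
    using openin_continuous_map_preimage[OF fc H(2)] by simp
  have cC: "compactin T (carrier G)" using compact topsp by (metis compact_space_def)
  have sub1: "carrier G \<times> {\<one>} \<subseteq> ?W" using topsp subgroup.one_closed[OF H(1)] by auto
  have "\<exists>U W1. openin T U \<and> openin T W1 \<and> carrier G \<subseteq> U \<and> \<one> \<in> W1 \<and> U \<times> W1 \<subseteq> ?W"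
    by (rule tube_lemma_left[OF W cC _ sub1]) (simp add: topsp)
  then obtain U W1 where UW: "openin T U" "openin T W1" "carrier G \<subseteq> U" "\<one> \<in> W1" "U \<times> W1 \<subseteq> ?W"
    by blast
  have W1c: "W1 \<subseteq> carrier G" using openin_subset[OF UW(2)] topsp by simp
  have CW: "c \<otimes> w \<otimes> inv c \<in> H" if "c \<in> carrier G" "w \<in> W1" for c w
  proof -
    have "(c, w) \<in> U \<times> W1" using that UW(3) by auto
    then have "(c, w) \<in> ?W" using UW(5) by (rule rev_subsetD)
    then show ?thesis by simp
  qed
  define N where "N = {x\<in>carrier G. \<forall>c\<in>carrier G. c \<otimes> x \<otimes> inv c \<in> H}"
  have conj_mult: "c \<otimes> (x \<otimes> y) \<otimes> inv c = (c \<otimes> x \<otimes> inv c) \<otimes> (c \<otimes> y \<otimes> inv c)"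
    if "c \<in> carrier G" "x \<in> carrier G" "y \<in> carrier G" for c x y
    using that by (simp add: m_assoc inv_cancel_l cancel_inv_l)
  have sub: "subgroup N G"
  proof (rule subgroupI)
    show "N \<subseteq> carrier G" unfolding N_def by auto
    show "N \<noteq> {}" unfolding N_def using subgroup.one_closed[OF H(1)] by auto
    fix a assume a: "a \<in> N"
    show "inv a \<in> N" unfolding N_def
    proof (intro CollectI conjI ballI)
      show "inv a \<in> carrier G" using a unfolding N_def by auto
      fix c assume c: "c \<in> carrier G"
      have "inv (c \<otimes> a \<otimes> inv c) \<in> H" using a c H(1) unfolding N_def by (auto intro: subgroup.m_inv_closed)
      then show "c \<otimes> inv a \<otimes> inv c \<in> H" using a c unfolding N_def by (simp add: m_assoc inv_mult_group inv_cancel_l cancel_inv_l)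
    qed
    fix b assume b: "b \<in> N"
    show "a \<otimes> b \<in> N" unfolding N_def
    proof (intro CollectI conjI ballI)
      show "a \<otimes> b \<in> carrier G" using a b unfolding N_def by auto
      fix c assume c: "c \<in> carrier G"
      have "(c \<otimes> a \<otimes> inv c) \<otimes> (c \<otimes> b \<otimes> inv c) \<in> H" using a b c H(1) unfolding N_def by (auto intro: subgroup.m_closed)
      then show "c \<otimes> (a \<otimes> b) \<otimes> inv c \<in> H" using a b c conj_mult unfolding N_def by auto
    qed
  qed
  have nor: "N \<lhd> G"
    unfolding normal_inv_iff
  proof (intro conjI ballI sub)
    fix x h assume x: "x \<in> carrier G" and h: "h \<in> N"
    show "x \<otimes> h \<otimes> inv x \<in> N" unfolding N_def
    proof (intro CollectI conjI ballI)
      show "x \<otimes> h \<otimes> inv x \<in> carrier G" using x h unfolding N_def by auto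
      fix c assume c: "c \<in> carrier G"
      have "(c \<otimes> x) \<otimes> h \<otimes> inv (c \<otimes> x) \<in> H" using h c x unfolding N_def by auto
      then show "c \<otimes> (x \<otimes> h \<otimes> inv x) \<otimes> inv c \<in> H" using x h c unfolding N_def by (simp add: m_assoc inv_mult_group inv_cancel_l cancel_inv_l)
    qed
  qed
  have NH: "N \<subseteq> H"
  proof
    fix x assume "x \<in> N"
    then have "\<forall>c\<in>carrier G. c \<otimes> x \<otimes> inv c \<in> H" "x \<in> carrier G" unfolding N_def by auto
    then have "\<one> \<otimes> x \<otimes> inv \<one> \<in> H" "x \<in> carrier G" by blast+
    then show "x \<in> H" by simp
  qed
  have "openin T N"
  proof (subst openin_subopen, intro ballI)
    fix x assume x: "x \<in> N"
    have xc: "x \<in> carrier G" using x unfolding N_def by auto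
    let ?T = "{y\<in>carrier G. inv x \<otimes> y \<in> W1}"
    have "openin T ?T" by (rule open_pre[OF cont_mult[OF cont_const cont_id] UW(2)]) (use xc in auto)
    moreover have "x \<in> ?T" using xc UW(4) by auto
    moreover have "?T \<subseteq> N"
    proof
      fix y assume y: "y \<in> ?T"
      define w where "w = inv x \<otimes> y"
      have w: "w \<in> W1" "w \<in> carrier G" using y W1c unfolding w_def by auto
      have yc: "y \<in> carrier G" using y by auto
      have ye: "y = x \<otimes> w" using xc yc unfolding w_def by (simp add: m_assoc[symmetric])
      show "y \<in> N" unfolding N_def
      proof (intro CollectI conjI ballI yc)
        fix c assume c: "c \<in> carrier G"
        have "(c \<otimes> x \<otimes> inv c) \<otimes> (c \<otimes> w \<otimes> inv c) \<in> H"
          using x c CW[OF c w(1)] H(1) unfolding N_def by (auto intro: subgroup.m_closed)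
        then show "c \<otimes> y \<otimes> inv c \<in> H" using ye conj_mult c xc w by auto
      qed
    qed
    ultimately show "\<exists>U. openin T U \<and> x \<in> U \<and> U \<subseteq> N" by blast
  qed
  then show ?thesis using that nor NH by blast
qed

lemma open_normal_nbhd:
  assumes "openin T U" "\<one> \<in> U"
  obtains N where "N \<lhd> G" "openin T N" "N \<subseteq> U"
proof -
  obtain V where V: "openin T V" "closedin T V" "\<one> \<in> V" "V \<subseteq> U" using clopen_nbhd assms by blast
  obtain H where H: "subgroup H G" "openin T H" "H \<subseteq> V" using open_subgroup_in_clopen V by blast
  obtain N where "N \<lhd> G" "openin T N" "N \<subseteq> H" using normal_core H by blast
  then show ?thesis using that H V by blast
qed

lemma separate:
  assumes "x \<in> carrier G" "x \<noteq> \<one>"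
  shows "\<exists>N. N \<lhd> G \<and> openin T N \<and> x \<notin> N"
proof -
  have "openin T (carrier G - {x})" using closed_sing[OF assms(1)] topsp by (simp add: closedin_def)
  then obtain N where "N \<lhd> G" "openin T N" "N \<subseteq> carrier G - {x}" using open_normal_nbhd assms by blast
  then show ?thesis by blast
qed

end
context tgrp begin
lemma core_lemma:
  assumes sep: "\<And>x. x \<in> carrier G \<Longrightarrow> x \<noteq> \<one> \<Longrightarrow>
     \<exists>(Q::'q monoid) \<psi>. C_group Q \<and> \<psi> \<in> hom G Q \<and> \<psi> x \<noteq> \<one>\<^bsub>Q\<^esub> \<and>
        (\<forall>S. closedin T {g\<in>carrier G. \<psi> g \<in> S})"
  and H: "subgroup H G" "closedin T H"
  shows "\<exists>K. perm_complement G H K \<and> closedin T K"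
proof -
  have Hc: "H \<subseteq> carrier G" using H(1) subgroup.subset by blast
  define \<K> where "\<K> = {K. subgroup K G \<and> closedin T K \<and> H <#> K = carrier G}"
  have carrK: "carrier G \<in> \<K>" unfolding \<K>_def
  proof (intro CollectI conjI)
    show "subgroup (carrier G) G" by (rule subgroup_self)
    show "closedin T (carrier G)" using topsp by (metis closedin_topspace)
    show "H <#> carrier G = carrier G"
    proof
      show "H <#> carrier G \<subseteq> carrier G" using Hc unfolding set_mult_def by auto
      show "carrier G \<subseteq> H <#> carrier G"
      proof
        fix g assume "g \<in> carrier G"
        then have "g = \<one> \<otimes> g" by simp
        then show "g \<in> H <#> carrier G" unfolding set_mult_def
          using \<open>g \<in> carrier G\<close> subgroup.one_closed[OF H(1)] by blast
      qed
    qed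
  qed
  have "\<exists>m\<in>\<K>. \<forall>a\<in>\<K>. m \<supseteq> a \<longrightarrow> a = m"
  proof (rule predicate_Zorn)
    show "partial_order_on \<K> (relation_of (\<lambda>a b. a \<supseteq> b) \<K>)"
      unfolding partial_order_on_def preorder_on_def refl_on_def trans_on_def antisym_on_def relation_of_def
      by auto
    fix C assume C: "C \<in> Chains (relation_of (\<lambda>a b. a \<supseteq> b) \<K>)"
    have CK: "C \<subseteq> \<K>" using C unfolding Chains_def relation_of_def by auto
    have Ctot: "\<And>a b. a \<in> C \<Longrightarrow> b \<in> C \<Longrightarrow> a \<subseteq> b \<or> b \<subseteq> a"
      using C unfolding Chains_def relation_of_def by auto
    show "\<exists>u\<in>\<K>. \<forall>a\<in>C. a \<supseteq> u"
    proof (cases "C = {}")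
      case True then show ?thesis using carrK by auto
    next
      case False
      have K0: "\<Inter>C \<in> \<K>" unfolding \<K>_def
      proof (intro CollectI conjI)
        show "subgroup (\<Inter>C) G" using CK False unfolding \<K>_def by (auto intro: subgroups_Inter)
        show "closedin T (\<Inter>C)" using CK False unfolding \<K>_def by (auto intro: closedin_Inter)
        show "H <#> \<Inter>C = carrier G"
        proof
          obtain K1 where "K1 \<in> C" using False by auto
          then have "subgroup K1 G" using CK unfolding \<K>_def by auto
          then have "K1 \<subseteq> carrier G" by (rule subgroup.subset)
          then have "\<Inter>C \<subseteq> carrier G" using \<open>K1 \<in> C\<close> by blast
          then show "H <#> \<Inter>C \<subseteq> carrier G" using Hc unfolding set_mult_def by auto
          show "carrier G \<subseteq> H <#> \<Inter>C"
          proof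
            fix g assume g: "g \<in> carrier G"
            define F where "F K = K \<inter> {k\<in>carrier G. g \<otimes> inv k \<in> H}" for K
            have Fcl: "closedin T (F K)" if "K \<in> C" for K
              unfolding F_def
              apply (rule closedin_Int)
              using that CK \<K>_def apply blast
              by (rule closed_pre[OF cont_mult[OF cont_const cont_inv[OF cont_id]] H(2)]) (use g in auto)
            have Fne: "F K \<noteq> {}" if "K \<in> C" for K
            proof -
              have "g \<in> H <#> K" using that CK g unfolding \<K>_def by auto
              then obtain h k where hk: "h \<in> H" "k \<in> K" "g = h \<otimes> k" unfolding set_mult_def by auto
              have kc: "k \<in> carrier G" using hk(2) that CK unfolding \<K>_def by (auto dest: subgroup.subset)
              have hc: "h \<in> carrier G" using hk Hc by auto
              have "g \<otimes> inv k = h" using hk kc hc by (simp add: m_assoc)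
              then show ?thesis using hk kc unfolding F_def by auto
            qed
            have Fmono: "K \<subseteq> K' \<Longrightarrow> F K \<subseteq> F K'" for K K' unfolding F_def by auto
            have "\<Inter>(F ` C) \<noteq> {}"
            proof (rule compact_space_fip[THEN iffD1, OF compact, rule_format], intro conjI allI impI)
              show "\<forall>Z\<in>F ` C. closedin T Z" using Fcl by auto
              fix \<F> assume \<F>: "finite \<F> \<and> \<F> \<subseteq> F ` C"
              then obtain C0 where C0: "C0 \<subseteq> C" "finite C0" "\<F> = F ` C0"
                by (meson finite_subset_image)
              show "\<Inter>\<F> \<noteq> {}"
              proof (cases "C0 = {}")
                case True then show ?thesis using C0 by auto
              next
                case False
                have "subset.chain UNIV C0" unfolding subset_chain_def using C0 Ctot by auto
                then have "\<Inter>C0 \<in> C0" using Inter_in_chain C0 False by blast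
                have "F (\<Inter>C0) \<subseteq> F K" if "K \<in> C0" for K
                  using that by (intro Fmono) auto
                then have "F (\<Inter>C0) \<subseteq> \<Inter>\<F>" using C0 by auto
                moreover have "F (\<Inter>C0) \<noteq> {}" using Fne \<open>\<Inter>C0 \<in> C0\<close> C0 by auto
                ultimately show ?thesis by auto
              qed
            qed
            then obtain k where k: "\<And>K. K \<in> C \<Longrightarrow> k \<in> F K" by auto
            obtain K1 where K1: "K1 \<in> C" using False by auto
            have kc: "k \<in> carrier G" "g \<otimes> inv k \<in> H" using k[OF K1] unfolding F_def by auto
            have "k \<in> \<Inter>C" using k unfolding F_def by auto
            moreover have "g = (g \<otimes> inv k) \<otimes> k" using kc g by (simp add: m_assoc)
            ultimately show "g \<in> H <#> \<Inter>C" unfolding set_mult_def using kc by blast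
          qed
        qed
      qed
      then show ?thesis by auto
    qed
  qed
  then obtain K where K: "K \<in> \<K>" and Kmin: "\<And>K'. K' \<in> \<K> \<Longrightarrow> K' \<subseteq> K \<Longrightarrow> K' = K" by blast
  have Ksub: "subgroup K G" and Kcl: "closedin T K" and HK: "H <#> K = carrier G" using K unfolding \<K>_def by auto
  have Kc: "K \<subseteq> carrier G" using Ksub subgroup.subset by blast
  have "H \<inter> K = {\<one>}"
  proof (rule ccontr)
    assume "H \<inter> K \<noteq> {\<one>}"
    then obtain x where x: "x \<in> H" "x \<in> K" "x \<noteq> \<one>"
      using subgroup.one_closed[OF H(1)] subgroup.one_closed[OF Ksub] by blast
    have xc: "x \<in> carrier G" using x Hc by auto
    obtain Q :: "'q monoid" and \<psi> where Q: "C_group Q" "\<psi> \<in> hom G Q" "\<psi> x \<noteq> \<one>\<^bsub>Q\<^esub>"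
        "\<And>S. closedin T {g\<in>carrier G. \<psi> g \<in> S}"
      using sep[OF xc x(3)] by blast
    have gQ: "group Q" using Q(1) unfolding C_group_def by auto
    interpret Q: group Q by (rule gQ)
    interpret gh: group_hom G Q \<psi> unfolding group_hom_def group_hom_axioms_def using gQ Q(2) group_axioms by auto
    have HKsub: "subgroup (H \<inter> K) G" using H(1) Ksub by (rule subgroups_Inter_pair)
    have Bsub: "subgroup (\<psi> ` (H \<inter> K)) Q" by (rule gh.subgroup_img_is_subgroup[OF HKsub])
    obtain L' where L': "subgroup L' Q" "\<psi> ` (H \<inter> K) <#>\<^bsub>Q\<^esub> L' = carrier Q"
        "\<psi> ` (H \<inter> K) \<inter> L' = {\<one>\<^bsub>Q\<^esub>}"
      using Q(1) Bsub unfolding C_group_def perm_complement_def by blast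
    have L'c: "L' \<subseteq> carrier Q" using L'(1) subgroup.subset by blast
    define L where "L = K \<inter> {g\<in>carrier G. \<psi> g \<in> L'}"
    have Lsub: "subgroup L G"
    proof (rule subgroupI)
      show "L \<subseteq> carrier G" unfolding L_def by auto
      show "L \<noteq> {}" unfolding L_def using subgroup.one_closed[OF Ksub] subgroup.one_closed[OF L'(1)] by auto
      fix a assume a: "a \<in> L"
      then show "inv a \<in> L" unfolding L_def using subgroup.m_inv_closed[OF Ksub] subgroup.m_inv_closed[OF L'(1)] by auto
      fix b assume b: "b \<in> L"
      then show "a \<otimes> b \<in> L" using a unfolding L_def using subgroup.m_closed[OF Ksub] subgroup.m_closed[OF L'(1)] by auto
    qed
    have Lcl: "closedin T L" unfolding L_def using Kcl Q(4) by blast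
    have HL: "H <#> L = carrier G"
    proof
      show "H <#> L \<subseteq> carrier G" using Hc unfolding L_def set_mult_def by auto
      show "carrier G \<subseteq> H <#> L"
      proof
        fix g assume g: "g \<in> carrier G"
        then have "g \<in> H <#> K" using HK by simp
        then obtain h k where hk: "h \<in> H" "k \<in> K" "g = h \<otimes> k" unfolding set_mult_def by auto
        have kc: "k \<in> carrier G" using hk Kc by auto
        have hc: "h \<in> carrier G" using hk Hc by auto
        have "\<psi> k \<in> carrier Q" using kc by simp
        then obtain b l' where bl: "b \<in> \<psi> ` (H \<inter> K)" "l' \<in> L'" "\<psi> k = b \<otimes>\<^bsub>Q\<^esub> l'"
          using L'(2) unfolding set_mult_def by blast
        then obtain d where d: "d \<in> H" "d \<in> K" "b = \<psi> d" by auto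
        have dc: "d \<in> carrier G" using d Hc by auto
        define k' where "k' = inv d \<otimes> k"
        have k'K: "k' \<in> K" unfolding k'_def using d hk subgroup.m_closed[OF Ksub] subgroup.m_inv_closed[OF Ksub] by auto
        have k'c: "k' \<in> carrier G" using k'K Kc by auto
        have "\<psi> k' = inv\<^bsub>Q\<^esub> (\<psi> d) \<otimes>\<^bsub>Q\<^esub> \<psi> k" unfolding k'_def using dc kc by simp
        also have "\<dots> = l'"
        proof -
          have l'c: "l' \<in> carrier Q" using bl(2) L'c by auto
          have "\<psi> k = \<psi> d \<otimes>\<^bsub>Q\<^esub> l'" using bl(3) d(3) by simp
          then show ?thesis using dc l'c by (simp add: Q.inv_cancel_l)
        qed
        finally have "k' \<in> L" unfolding L_def using k'K k'c bl by auto
        moreover have "g = (h \<otimes> d) \<otimes> k'" unfolding k'_def using hk hc dc kc by (simp add: m_assoc cancel_inv_l)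
        moreover have "h \<otimes> d \<in> H" using hk d subgroup.m_closed[OF H(1)] by auto
        ultimately show "g \<in> H <#> L" unfolding set_mult_def by blast
      qed
    qed
    have "L = K" using Kmin[of L] Lsub Lcl HL unfolding \<K>_def L_def by auto
    then have "\<psi> x \<in> L'" using x unfolding L_def by auto
    moreover have "\<psi> x \<in> \<psi> ` (H \<inter> K)" using x by auto
    ultimately show False using L'(3) Q(3) by auto
  qed
  then show ?thesis unfolding perm_complement_def using Ksub HK Kcl by auto
qed


lemma rcosets_open:
  assumes N: "subgroup N G" "openin T N" and C: "C \<in> rcosets N"
  shows "openin T C"
proof -
  obtain c where c: "c \<in> carrier G" "C = N #> c" using C unfolding RCOSETS_def by auto
  show ?thesis using open_rcos[OF N(2) subgroup.subset[OF N(1)] c(1)] c(2) by simp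
qed

lemma rcosets_closed:
  assumes N: "subgroup N G" "openin T N" and C: "C \<in> rcosets N"
  shows "closedin T C"
proof -
  obtain c where c: "c \<in> carrier G" "C = N #> c" using C unfolding RCOSETS_def by auto
  show ?thesis using closed_rcos[OF open_subgroup_closed[OF N] subgroup.subset[OF N(1)] c(1)] c(2) by simp
qed

lemma P3_quot:
  assumes P3: "\<forall>H. subgroup H G \<and> openin T H \<longrightarrow> (\<exists>K. perm_complement G H K)"
  and N: "N \<lhd> G" "openin T N"
  shows "C_group (G Mod N)"
proof -
  interpret normal N G by (rule N(1))
  interpret M: group "G Mod N" by (rule factorgroup_is_group)
  have Nsub: "subgroup N G" by (rule subgroup_axioms)
  have carrM: "carrier (G Mod N) = rcosets N" by (simp add: FactGroup_def)
  have multM: "\<And>A B. A \<otimes>\<^bsub>G Mod N\<^esub> B = A <#> B" by (simp add: FactGroup_def)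
  have oneM: "\<one>\<^bsub>G Mod N\<^esub> = N" by (simp add: FactGroup_def)
  have "\<exists>K. perm_complement (G Mod N) S K" if S: "subgroup S (G Mod N)" for S
  proof -
    have Sc: "S \<subseteq> rcosets N" using subgroup.subset[OF S] carrM by simp
    have NS: "N \<in> S" using subgroup.one_closed[OF S] oneM by simp
    have cos: "\<exists>c\<in>carrier G. C = N #> c" if "C \<in> S" for C
      using that Sc unfolding RCOSETS_def by auto
    have Ccar: "C \<subseteq> carrier G" if "C \<in> S" for C
      using cos[OF that] r_coset_subset_G[OF subset] by auto
    define H where "H = \<Union>S"
    have Hsub: "subgroup H G"
    proof (rule subgroupI)
      show "H \<subseteq> carrier G" unfolding H_def using Ccar by blast
      show "H \<noteq> {}" unfolding H_def using NS one_closed by blast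
      fix a assume a: "a \<in> H"
      then obtain C where C: "C \<in> S" "a \<in> C" unfolding H_def by auto
      have CM: "C \<in> carrier (G Mod N)" using C(1) subgroup.subset[OF S] by blast
      have "inv\<^bsub>G Mod N\<^esub> C \<in> S" by (rule subgroup.m_inv_closed[OF S C(1)])
      then have "set_inv C \<in> S" using inv_FactGroup[OF CM] by simp
      moreover have "inv a \<in> set_inv C" unfolding SET_INV_def using C(2) by auto
      ultimately show "inv a \<in> H" unfolding H_def by auto
      fix b assume b: "b \<in> H"
      then obtain D where D: "D \<in> S" "b \<in> D" unfolding H_def by auto
      have "C <#> D \<in> S" using subgroup.m_closed[OF S C(1) D(1)] multM by simp
      moreover have "a \<otimes> b \<in> C <#> D" unfolding set_mult_def using C(2) D(2) by auto
      ultimately show "a \<otimes> b \<in> H" unfolding H_def by auto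
    qed
    have Hopen: "openin T H" unfolding H_def
    proof (rule openin_Union)
      fix C assume "C \<in> S"
      then have "C \<in> rcosets N" using Sc by blast
      then show "openin T C" by (rule rcosets_open[OF Nsub N(2)])
    qed
    obtain K where K: "perm_complement G H K" using P3 Hsub Hopen by blast
    have Ksub: "subgroup K G" and HK: "H <#> K = carrier G" and HKi: "H \<inter> K = {\<one>}"
      using K unfolding perm_complement_def by auto
    interpret gh: group_hom G "G Mod N" "\<lambda>a. N #> a"
      unfolding group_hom_def group_hom_axioms_def
      using r_coset_hom_Mod group_axioms M.group_axioms by auto
    define K' where "K' = (\<lambda>a. N #> a) ` K"
    have K'sub: "subgroup K' (G Mod N)" unfolding K'_def by (rule gh.subgroup_img_is_subgroup[OF Ksub])
    have prod: "S <#>\<^bsub>G Mod N\<^esub> K' = carrier (G Mod N)"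
    proof
      show "S <#>\<^bsub>G Mod N\<^esub> K' \<subseteq> carrier (G Mod N)"
      proof
        fix E assume "E \<in> S <#>\<^bsub>G Mod N\<^esub> K'"
        then obtain A B where AB: "A \<in> S" "B \<in> K'" "E = A \<otimes>\<^bsub>G Mod N\<^esub> B" unfolding set_mult_def by auto
        have "A \<in> carrier (G Mod N)" "B \<in> carrier (G Mod N)"
          using AB subgroup.subset[OF S] subgroup.subset[OF K'sub] by auto
        then show "E \<in> carrier (G Mod N)" using AB(3) M.m_closed by simp
      qed
      show "carrier (G Mod N) \<subseteq> S <#>\<^bsub>G Mod N\<^esub> K'"
      proof
        fix E assume "E \<in> carrier (G Mod N)"
        then obtain g where g: "g \<in> carrier G" "E = N #> g" using carrM unfolding RCOSETS_def by auto
        then have "g \<in> H <#> K" using HK by simp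
        then obtain h k where hk: "h \<in> H" "k \<in> K" "g = h \<otimes> k" unfolding set_mult_def by auto
        have hc: "h \<in> carrier G" using hk(1) subgroup.subset[OF Hsub] by auto
        have kc: "k \<in> carrier G" using hk(2) subgroup.subset[OF Ksub] by auto
        obtain C where C: "C \<in> S" "h \<in> C" using hk(1) unfolding H_def by auto
        obtain c where c: "c \<in> carrier G" "C = N #> c" using cos[OF C(1)] by auto
        have "h \<in> N #> c" using C(2) c(2) by simp
        then have "N #> c = N #> h" by (rule repr_independence[OF _ c(1) Nsub])
        then have Ceq: "C = N #> h" using c(2) by simp
        have "E = N #> (h \<otimes> k)" using g(2) hk(3) by simp
        also have "\<dots> = (N #> h) <#> (N #> k)" by (rule rcos_sum[symmetric, OF hc kc])
        also have "\<dots> = C \<otimes>\<^bsub>G Mod N\<^esub> (N #> k)" using Ceq multM by simp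
        finally have Ee: "E = C \<otimes>\<^bsub>G Mod N\<^esub> (N #> k)" .
        have "N #> k \<in> K'" unfolding K'_def using hk(2) by (rule imageI)
        then show "E \<in> S <#>\<^bsub>G Mod N\<^esub> K'"
          unfolding set_mult_def using C(1) Ee by auto
      qed
    qed
    have inter: "S \<inter> K' = {\<one>\<^bsub>G Mod N\<^esub>}"
    proof
      show "{\<one>\<^bsub>G Mod N\<^esub>} \<subseteq> S \<inter> K'"
        using subgroup.one_closed[OF S] subgroup.one_closed[OF K'sub] by auto
      show "S \<inter> K' \<subseteq> {\<one>\<^bsub>G Mod N\<^esub>}"
      proof
        fix C assume C: "C \<in> S \<inter> K'"
        then obtain k where k: "k \<in> K" "C = N #> k" unfolding K'_def by auto
        have kc: "k \<in> carrier G" using k(1) subgroup.subset[OF Ksub] by auto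
        have "k \<in> C" using k rcos_self[OF kc Nsub] by simp
        then have "k \<in> H" using C unfolding H_def by auto
        then have "k = \<one>" using HKi k(1) by auto
        then have "C = N" using k(2) subset by simp
        then show "C \<in> {\<one>\<^bsub>G Mod N\<^esub>}" using oneM by simp
      qed
    qed
    show ?thesis unfolding perm_complement_def using K'sub prod inter by blast
  qed
  then show ?thesis unfolding C_group_def using M.group_axioms by blast
qed


lemma finite_rcosets:
  assumes N: "subgroup N G" "openin T N"
  shows "finite (rcosets N)"
proof -
  have "compactin T (topspace T)" using compact by (simp add: compact_space_def)
  then have cc: "compactin T (carrier G)" using topsp by simp
  have opn: "\<forall>C\<in>rcosets N. openin T C"
  proof
    fix C assume C: "C \<in> rcosets N"
    obtain c where c: "c \<in> carrier G" "C = N #> c" using C unfolding RCOSETS_def by auto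
    show "openin T C" using open_rcos[OF N(2) subgroup.subset[OF N(1)] c(1)] c(2) by simp
  qed
  have cov: "carrier G \<subseteq> \<Union>(rcosets N)" using rcosets_part_G[OF N(1)] by simp
  obtain F where F: "finite F" "F \<subseteq> rcosets N" "carrier G \<subseteq> \<Union>F"
    using cc opn cov unfolding compactin_def by meson
  have "rcosets N \<subseteq> F"
  proof
    fix C assume C: "C \<in> rcosets N"
    obtain c where c: "c \<in> carrier G" "C = N #> c" using C unfolding RCOSETS_def by auto
    have cC: "c \<in> C" using rcos_self[OF c(1) N(1)] c(2) by simp
    then obtain D where D: "D \<in> F" "c \<in> D" using F(3) c(1) by blast
    have "D \<in> rcosets N" using D F(2) by blast
    then have "C = D" using rcos_disjoint[OF N(1)] C cC D(2) unfolding pairwise_def disjnt_def by blast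
    then show "C \<in> F" using D by simp
  qed
  then show ?thesis using F(1) finite_subset by blast
qed

lemma coset_pred_open:
  assumes N: "subgroup N G" "openin T N"
  shows "openin T {g\<in>carrier G. Pr (N #> g)}"
proof (rule saturated_open[OF N])
  fix a assume a: "a \<in> {g\<in>carrier G. Pr (N #> g)}"
  show "N #> a \<subseteq> {g\<in>carrier G. Pr (N #> g)}"
  proof
    fix y assume y: "y \<in> N #> a"
    have ac: "a \<in> carrier G" using a by simp
    have yc: "y \<in> carrier G" using y r_coset_subset_G[OF subgroup.subset[OF N(1)] ac] by blast
    have "N #> a = N #> y" by (rule repr_independence[OF y ac N(1)])
    then show "y \<in> {g\<in>carrier G. Pr (N #> g)}" using a yc by simp
  qed
qed auto

lemma coset_pred_closed:
  assumes N: "subgroup N G" "openin T N"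
  shows "closedin T {g\<in>carrier G. Pr (N #> g)}"
proof -
  have "openin T {g\<in>carrier G. \<not> Pr (N #> g)}" by (rule coset_pred_open[OF N])
  moreover have "{g\<in>carrier G. \<not> Pr (N #> g)} = topspace T - {g\<in>carrier G. Pr (N #> g)}"
    using topsp by auto
  ultimately show ?thesis using topsp by (simp add: closedin_def)
qed

lemma all_quot_C:
  assumes P5: "\<forall>\<N>. ((\<forall>N\<in>\<N>. N \<lhd> G \<and> openin T N) \<and>
                       (\<forall>U. openin T U \<and> \<one> \<in> U \<longrightarrow> (\<exists>N\<in>\<N>. N \<subseteq> U)))
                   \<longrightarrow> (\<forall>N\<in>\<N>. C_group (G Mod N))"
  shows "\<forall>N. N \<lhd> G \<and> openin T N \<longrightarrow> C_group (G Mod N)"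
proof -
  let ?A = "{N. N \<lhd> G \<and> openin T N}"
  have "\<forall>U. openin T U \<and> \<one> \<in> U \<longrightarrow> (\<exists>N\<in>?A. N \<subseteq> U)"
  proof (intro allI impI)
    fix U assume "openin T U \<and> \<one> \<in> U"
    then obtain N where "N \<lhd> G" "openin T N" "N \<subseteq> U" using open_normal_nbhd by blast
    then show "\<exists>N\<in>?A. N \<subseteq> U" by blast
  qed
  then have "\<forall>N\<in>?A. C_group (G Mod N)" using P5[rule_format, of ?A] by blast
  then show ?thesis by blast
qed

lemma quot_sep:
  assumes allC: "\<forall>N. N \<lhd> G \<and> openin T N \<longrightarrow> C_group (G Mod N)"
    and x: "x \<in> carrier G" "x \<noteq> \<one>"
  shows "\<exists>(Q::'a set monoid) \<psi>. C_group Q \<and> \<psi> \<in> hom G Q \<and> \<psi> x \<noteq> \<one>\<^bsub>Q\<^esub> \<and>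
        (\<forall>S. closedin T {g\<in>carrier G. \<psi> g \<in> S})"
proof -
  obtain N where N: "N \<lhd> G" "openin T N" "x \<notin> N" using separate[OF x] by blast
  have Nsub: "subgroup N G" using N(1) normal_imp_subgroup by blast
  have "C_group (G Mod N)" using allC N by blast
  moreover have "(\<lambda>a. N #> a) \<in> hom G (G Mod N)" using normal.r_coset_hom_Mod[OF N(1)] .
  moreover have "N #> x \<noteq> \<one>\<^bsub>G Mod N\<^esub>"
  proof
    assume "N #> x = \<one>\<^bsub>G Mod N\<^esub>"
    then have "N #> x = N" by (simp add: FactGroup_def)
    moreover have "x \<in> N #> x" by (rule rcos_self[OF x(1) Nsub])
    ultimately show False using N(3) by simp
  qed
  moreover have "\<forall>S. closedin T {g\<in>carrier G. N #> g \<in> S}"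
  proof
    fix S show "closedin T {g\<in>carrier G. N #> g \<in> S}"
      using coset_pred_closed[OF Nsub N(2), of "\<lambda>C. C \<in> S"] by simp
  qed
  ultimately show ?thesis by blast
qed

end
context tgrp begin

lemma invlim_sep:
  fixes Gs :: "'i \<Rightarrow> 'b monoid"
  assumes sys: "inverse_system I leq Gs f" and CG: "\<forall>i\<in>I. C_group (Gs i)"
    and iso: "\<phi> \<in> iso G (inv_lim_group I leq Gs f)"
    and hm: "homeomorphic_map T (inv_lim_topology I leq Gs f) \<phi>"
    and x: "x \<in> carrier G" "x \<noteq> \<one>"
  shows "\<exists>(Q::'b monoid) \<psi>. C_group Q \<and> \<psi> \<in> hom G Q \<and> \<psi> x \<noteq> \<one>\<^bsub>Q\<^esub> \<and>
        (\<forall>S. closedin T {g\<in>carrier G. \<psi> g \<in> S})"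
proof -
  let ?L = "inv_lim_group I leq Gs f"
  have grp: "\<And>i. i \<in> I \<Longrightarrow> group (Gs i)" using sys unfolding inverse_system_def by blast
  have carL: "carrier ?L = inv_lim_carrier I leq Gs f" by (simp add: inv_lim_group_def)
  have multL: "\<And>a b. a \<otimes>\<^bsub>?L\<^esub> b = (\<lambda>i\<in>I. a i \<otimes>\<^bsub>Gs i\<^esub> b i)" by (simp add: inv_lim_group_def)
  have phom: "\<phi> \<in> hom G ?L" and pbij: "bij_betw \<phi> (carrier G) (carrier ?L)"
    using iso unfolding iso_def by auto
  have pc: "\<phi> g \<in> PiE I (\<lambda>i. carrier (Gs i))" if "g \<in> carrier G" for g
  proof -
    have "\<phi> g \<in> carrier ?L" using phom that unfolding hom_def by auto
    then show ?thesis using carL unfolding inv_lim_carrier_def by auto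
  qed
  have pm: "\<phi> (a \<otimes> b) i = \<phi> a i \<otimes>\<^bsub>Gs i\<^esub> \<phi> b i" if "a \<in> carrier G" "b \<in> carrier G" "i \<in> I" for a b i
  proof -
    have "\<phi> (a \<otimes> b) = \<phi> a \<otimes>\<^bsub>?L\<^esub> \<phi> b" using phom that unfolding hom_def by auto
    then show ?thesis using multL that(3) by simp
  qed
  have p1: "\<phi> \<one> i = \<one>\<^bsub>Gs i\<^esub>" if i: "i \<in> I" for i
  proof -
    have c: "\<phi> \<one> i \<in> carrier (Gs i)" using pc[OF one_closed] i by auto
    have "\<phi> \<one> i \<otimes>\<^bsub>Gs i\<^esub> \<phi> \<one> i = \<phi> \<one> i" using pm[OF one_closed one_closed i] by simp
    then show ?thesis using group.l_cancel_one[OF grp[OF i] c c] by simp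
  qed
  have "\<phi> x \<noteq> \<phi> \<one>" using bij_betw_imp_inj_on[OF pbij] x by (meson inj_onD one_closed)
  then obtain i where i: "i \<in> I" "\<phi> x i \<noteq> \<phi> \<one> i"
    using PiE_ext[OF pc[OF x(1)] pc[OF one_closed]] by blast
  let ?\<psi> = "\<lambda>g. \<phi> g i"
  have "?\<psi> \<in> hom G (Gs i)" unfolding hom_def
  proof (intro CollectI conjI ballI)
    show "?\<psi> \<in> carrier G \<rightarrow> carrier (Gs i)" using pc i by auto
    fix a b assume "a \<in> carrier G" "b \<in> carrier G"
    then show "?\<psi> (a \<otimes> b) = ?\<psi> a \<otimes>\<^bsub>Gs i\<^esub> ?\<psi> b" using pm i by simp
  qed
  moreover have "?\<psi> x \<noteq> \<one>\<^bsub>Gs i\<^esub>" using i p1 by simp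
  moreover have "\<forall>S. closedin T {g\<in>carrier G. ?\<psi> g \<in> S}"
  proof
    fix S
    have "continuous_map T (inv_lim_topology I leq Gs f) \<phi>" using hm by (rule homeomorphic_imp_continuous_map)
    then have "continuous_map T (product_topology (\<lambda>i. discrete_topology (carrier (Gs i))) I) \<phi>"
      unfolding inv_lim_topology_def continuous_map_in_subtopology by blast
    then have cm: "continuous_map T (discrete_topology (carrier (Gs i))) ?\<psi>"
      using continuous_map_compose[OF _ continuous_map_product_projection[OF i(1)]]
      by (simp add: o_def)
    have "closedin T {g\<in>topspace T. ?\<psi> g \<in> S \<inter> carrier (Gs i)}"
      by (rule closedin_continuous_map_preimage[OF cm]) (simp add: closedin_discrete_topology)
    moreover have "{g\<in>topspace T. ?\<psi> g \<in> S \<inter> carrier (Gs i)} = {g\<in>carrier G. ?\<psi> g \<in> S}"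
      using topsp pc i by auto
    ultimately show "closedin T {g\<in>carrier G. ?\<psi> g \<in> S}" by simp
  qed
  ultimately show ?thesis using CG i by blast
qed

end

context group begin

lemma normal_Inter:
  assumes ne: "\<A> \<noteq> {}" and nor: "\<And>N. N \<in> \<A> \<Longrightarrow> N \<lhd> G"
  shows "\<Inter>\<A> \<lhd> G"
  unfolding normal_inv_iff
proof (intro conjI ballI)
  show "subgroup (\<Inter>\<A>) G" using ne nor normal_imp_subgroup by (blast intro: subgroups_Inter)
  fix x h assume x: "x \<in> carrier G" and h: "h \<in> \<Inter>\<A>"
  show "x \<otimes> h \<otimes> inv x \<in> \<Inter>\<A>"
  proof
    fix N assume N: "N \<in> \<A>"
    then have "h \<in> N" using h by blast
    then show "x \<otimes> h \<otimes> inv x \<in> N" using nor[OF N] x unfolding normal_inv_iff by blast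
  qed
qed

lemma normal_carrier: "carrier G \<lhd> G"
  unfolding normal_inv_iff using subgroup_self by auto

lemma coset_absorb:
  assumes N: "subgroup N G" and M: "subgroup M G" and MN: "M \<subseteq> N" and g: "g \<in> carrier G"
  shows "N <#> (M #> g) = N #> g"
proof -
  have Nc: "N \<subseteq> carrier G" using N subgroup.subset by blast
  have Mc: "M \<subseteq> carrier G" using M subgroup.subset by blast
  have NM: "N <#> M = N"
  proof
    show "N <#> M \<subseteq> N" unfolding set_mult_def using MN subgroup.m_closed[OF N] by blast
    show "N \<subseteq> N <#> M"
    proof
      fix n assume n: "n \<in> N"
      then have "n = n \<otimes> \<one>" using Nc by auto
      moreover have "\<one> \<in> M" using subgroup.one_closed[OF M] .
      ultimately show "n \<in> N <#> M" unfolding set_mult_def using n by blast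
    qed
  qed
  have "N <#> (M #> g) = (N <#> M) #> g" by (rule setmult_rcos_assoc[OF Nc Mc g])
  then show ?thesis using NM by simp
qed

end

context tgrp begin

lemma invlim_construct:
  assumes allC: "\<forall>N. N \<lhd> G \<and> openin T N \<longrightarrow> C_group (G Mod N)"
  shows "inv_lim_of_finite_C_groups G T TYPE('a set) TYPE('a set)"
proof -
  define I where "I = {N. N \<lhd> G \<and> openin T N}"
  define leq :: "'a set \<Rightarrow> 'a set \<Rightarrow> bool" where "leq = (\<lambda>N M. M \<subseteq> N)"
  define Gs where "Gs = (\<lambda>N. G Mod N)"
  define f :: "'a set \<Rightarrow> 'a set \<Rightarrow> 'a set \<Rightarrow> 'a set" where "f = (\<lambda>N M C. N <#> C)"
  define \<phi> where "\<phi> = (\<lambda>g. \<lambda>N\<in>I. N #> g)"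
  have IN: "N \<lhd> G" "subgroup N G" "openin T N" "N \<subseteq> carrier G" if "N \<in> I" for N
    using that normal_imp_subgroup subgroup.subset unfolding I_def by blast+
  have carGs: "carrier (Gs N) = rcosets N" for N by (simp add: Gs_def FactGroup_def)
  have multGs: "x \<otimes>\<^bsub>Gs N\<^esub> y = x <#> y" for N x y by (simp add: Gs_def FactGroup_def)
  have rc: "\<exists>g\<in>carrier G. C = N #> g" if "C \<in> rcosets N" for C N
    using that unfolding RCOSETS_def by auto
  have absorb: "f N M (M #> g) = N #> g" if "N \<in> I" "M \<in> I" "M \<subseteq> N" "g \<in> carrier G" for N M g
    unfolding f_def by (rule coset_absorb[OF IN(2)[OF that(1)] IN(2)[OF that(2)] that(3) that(4)])
  have carrI: "carrier G \<in> I" unfolding I_def using normal_carrier topsp by (metis (mono_tags, lifting) mem_Collect_eq openin_topspace)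
  have IntI: "N \<inter> M \<in> I" if "N \<in> I" "M \<in> I" for N M
  proof -
    have "\<Inter>{N, M} \<lhd> G" by (rule normal_Inter) (use IN that in auto)
    moreover have "openin T (N \<inter> M)" using IN that by blast
    ultimately show ?thesis unfolding I_def by simp
  qed
  have s1: "I \<noteq> {}" using carrI by blast
  have s2: "\<forall>i\<in>I. leq i i" unfolding leq_def by blast
  have s3: "\<forall>i\<in>I. \<forall>j\<in>I. \<forall>k\<in>I. leq i j \<longrightarrow> leq j k \<longrightarrow> leq i k" unfolding leq_def by blast
  have s4: "\<forall>i\<in>I. \<forall>j\<in>I. \<exists>k\<in>I. leq i k \<and> leq j k"
  proof (intro ballI)
    fix i j assume "i \<in> I" "j \<in> I"
    then show "\<exists>k\<in>I. leq i k \<and> leq j k" using IntI unfolding leq_def by blast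
  qed
  have s5: "\<forall>i\<in>I. group (Gs i)" unfolding Gs_def using IN(1) normal.factorgroup_is_group by blast
  have s6: "\<forall>i\<in>I. \<forall>j\<in>I. leq i j \<longrightarrow> f i j \<in> hom (Gs j) (Gs i)"
  proof (intro ballI impI)
    fix N M assume NM: "N \<in> I" "M \<in> I" "leq N M"
    then have MN: "M \<subseteq> N" unfolding leq_def by simp
    show "f N M \<in> hom (Gs M) (Gs N)" unfolding hom_def
    proof (intro CollectI conjI ballI)
      show "f N M \<in> carrier (Gs M) \<rightarrow> carrier (Gs N)"
      proof
        fix C assume "C \<in> carrier (Gs M)"
        then obtain g where g: "g \<in> carrier G" "C = M #> g" using rc carGs by blast
        have "f N M C = N #> g" using absorb[OF NM(1,2) MN g(1)] g(2) by simp
        then show "f N M C \<in> carrier (Gs N)" using carGs rcosetsI[OF IN(4)[OF NM(1)] g(1)] by simp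
      qed
      fix C D assume CD: "C \<in> carrier (Gs M)" "D \<in> carrier (Gs M)"
      obtain a where a: "a \<in> carrier G" "C = M #> a" using rc carGs CD(1) by blast
      obtain b where b: "b \<in> carrier G" "D = M #> b" using rc carGs CD(2) by blast
      have ab: "a \<otimes> b \<in> carrier G" using a b by simp
      have "C \<otimes>\<^bsub>Gs M\<^esub> D = M #> (a \<otimes> b)"
        using multGs a b normal.rcos_sum[OF IN(1)[OF NM(2)] a(1) b(1)] by simp
      then have "f N M (C \<otimes>\<^bsub>Gs M\<^esub> D) = N #> (a \<otimes> b)" using absorb[OF NM(1,2) MN ab] by simp
      also have "\<dots> = (N #> a) <#> (N #> b)" using normal.rcos_sum[OF IN(1)[OF NM(1)] a(1) b(1)] by simp
      also have "\<dots> = f N M C \<otimes>\<^bsub>Gs N\<^esub> f N M D"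
        using multGs absorb[OF NM(1,2) MN a(1)] absorb[OF NM(1,2) MN b(1)] a(2) b(2) by simp
      finally show "f N M (C \<otimes>\<^bsub>Gs M\<^esub> D) = f N M C \<otimes>\<^bsub>Gs N\<^esub> f N M D" .
    qed
  qed
  have s7: "\<forall>i\<in>I. \<forall>x\<in>carrier (Gs i). f i i x = x"
  proof (intro ballI)
    fix N C assume N: "N \<in> I" and C: "C \<in> carrier (Gs N)"
    obtain g where g: "g \<in> carrier G" "C = N #> g" using rc carGs C by blast
    show "f N N C = C" using absorb[OF N N _ g(1)] g(2) by simp
  qed
  have s8: "\<forall>i\<in>I. \<forall>j\<in>I. \<forall>k\<in>I. leq i j \<longrightarrow> leq j k \<longrightarrow>
        (\<forall>x\<in>carrier (Gs k). f i j (f j k x) = f i k x)"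
  proof (intro ballI impI)
    fix N M K C assume NMK: "N \<in> I" "M \<in> I" "K \<in> I" "leq N M" "leq M K" and C: "C \<in> carrier (Gs K)"
    have MN: "M \<subseteq> N" "K \<subseteq> M" using NMK unfolding leq_def by auto
    obtain g where g: "g \<in> carrier G" "C = K #> g" using rc carGs C by blast
    have "f M K C = M #> g" using absorb[OF NMK(2,3) MN(2) g(1)] g(2) by simp
    then have "f N M (f M K C) = N #> g" using absorb[OF NMK(1,2) MN(1) g(1)] by simp
    moreover have "f N K C = N #> g" using absorb[OF NMK(1,3) _ g(1)] MN g(2) by simp
    ultimately show "f N M (f M K C) = f N K C" by simp
  qed
  have sys: "inverse_system I leq Gs f"
    unfolding inverse_system_def using s1 s2 s3 s4 s5 s6 s7 s8 by blast
  have fin: "\<forall>i\<in>I. finite (carrier (Gs i)) \<and> C_group (Gs i)"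
  proof
    fix N assume N: "N \<in> I"
    show "finite (carrier (Gs N)) \<and> C_group (Gs N)"
      using finite_rcosets[OF IN(2,3)[OF N]] carGs allC IN(1,3)[OF N] unfolding Gs_def by simp
  qed
  let ?L = "inv_lim_group I leq Gs f"
  have carL: "carrier ?L = inv_lim_carrier I leq Gs f" by (simp add: inv_lim_group_def)
  have multL: "\<And>a b. a \<otimes>\<^bsub>?L\<^esub> b = (\<lambda>i\<in>I. a i \<otimes>\<^bsub>Gs i\<^esub> b i)" by (simp add: inv_lim_group_def)
  have phiN: "\<phi> g N = N #> g" if "N \<in> I" for g N using that unfolding \<phi>_def by simp
  have phiPi: "\<phi> g \<in> PiE I (\<lambda>i. carrier (Gs i))" if g: "g \<in> carrier G" for g
    unfolding \<phi>_def using carGs rcosetsI[OF IN(4) g] by (simp add: restrict_PiE_iff)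
  have phic: "\<phi> g \<in> inv_lim_carrier I leq Gs f" if g: "g \<in> carrier G" for g
    unfolding inv_lim_carrier_def
  proof (intro CollectI conjI ballI impI)
    show "\<phi> g \<in> PiE I (\<lambda>i. carrier (Gs i))" by (rule phiPi[OF g])
    fix N M assume NM: "N \<in> I" "M \<in> I" "leq N M"
    show "f N M (\<phi> g M) = \<phi> g N" using phiN NM absorb[OF NM(1,2) _ g] unfolding leq_def by simp
  qed
  have phom: "\<phi> \<in> hom G ?L" unfolding hom_def
  proof (intro CollectI conjI ballI)
    show "\<phi> \<in> carrier G \<rightarrow> carrier ?L" using phic carL by simp
    fix a b assume a: "a \<in> carrier G" and b: "b \<in> carrier G"
    show "\<phi> (a \<otimes> b) = \<phi> a \<otimes>\<^bsub>?L\<^esub> \<phi> b"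
      unfolding multL \<phi>_def
    proof (rule restrict_ext)
      fix N assume N: "N \<in> I"
      show "N #> (a \<otimes> b) = (\<lambda>N\<in>I. N #> a) N \<otimes>\<^bsub>Gs N\<^esub> (\<lambda>N\<in>I. N #> b) N"
        using N multGs normal.rcos_sum[OF IN(1)[OF N] a b] by simp
    qed
  qed
  have pinj: "inj_on \<phi> (carrier G)"
  proof (rule inj_onI)
    fix a b assume a: "a \<in> carrier G" and b: "b \<in> carrier G" and e: "\<phi> a = \<phi> b"
    show "a = b"
    proof (rule ccontr)
      assume "a \<noteq> b"
      have xc: "a \<otimes> inv b \<in> carrier G" using a b by simp
      have "a \<otimes> inv b \<noteq> \<one>" using \<open>a \<noteq> b\<close> a b by (simp add: inv_solve_right')
      then obtain N where N: "N \<lhd> G" "openin T N" "a \<otimes> inv b \<notin> N" using separate[OF xc] by blast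
      have NI: "N \<in> I" unfolding I_def using N by simp
      have "N #> a = N #> b" using e phiN[OF NI] by metis
      moreover have "a \<in> N #> a" by (rule rcos_self[OF a IN(2)[OF NI]])
      ultimately have "a \<in> N #> b" by simp
      then obtain n where n: "n \<in> N" "a = n \<otimes> b" unfolding r_coset_def by auto
      have "a \<otimes> inv b = n" using n b IN(4)[OF NI] by (auto simp: m_assoc)
      then show False using n N(3) by simp
    qed
  qed
  have psurj: "\<phi> ` carrier G = inv_lim_carrier I leq Gs f"
  proof
    show "\<phi> ` carrier G \<subseteq> inv_lim_carrier I leq Gs f" using phic by blast
    show "inv_lim_carrier I leq Gs f \<subseteq> \<phi> ` carrier G"
    proof
      fix c assume c: "c \<in> inv_lim_carrier I leq Gs f"
      have cP: "c \<in> PiE I (\<lambda>i. carrier (Gs i))" using c unfolding inv_lim_carrier_def by blast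
      have ccomp: "\<And>N M. N \<in> I \<Longrightarrow> M \<in> I \<Longrightarrow> leq N M \<Longrightarrow> f N M (c M) = c N"
        using c unfolding inv_lim_carrier_def by blast
      have cN: "c N \<in> rcosets N" if "N \<in> I" for N using cP that carGs by auto
      have "\<Inter>(c ` I) \<noteq> {}"
      proof (rule compact_space_fip[THEN iffD1, OF compact, rule_format], intro conjI allI impI)
        show "\<forall>Z\<in>c ` I. closedin T Z" using cN rcosets_closed IN by blast
        fix \<F> assume \<F>: "finite \<F> \<and> \<F> \<subseteq> c ` I"
        then obtain I0 where I0: "I0 \<subseteq> I" "finite I0" "\<F> = c ` I0"
          by (meson finite_subset_image)
        show "\<Inter>\<F> \<noteq> {}"
        proof (cases "I0 = {}")
          case True then show ?thesis using I0 by auto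
        next
          case False
          let ?M = "\<Inter>I0"
          have MI: "?M \<in> I" unfolding I_def
          proof (intro CollectI conjI)
            show "?M \<lhd> G" by (rule normal_Inter[OF False]) (use I0 IN in blast)
            show "openin T ?M" by (rule openin_Inter[OF I0(2) False]) (use I0 IN in blast)
          qed
          obtain g where g: "g \<in> carrier G" "c ?M = ?M #> g" using rc cN[OF MI] by blast
          have "g \<in> c N" if N: "N \<in> I0" for N
          proof -
            have NI: "N \<in> I" using N I0 by blast
            have sub: "?M \<subseteq> N" using N by blast
            have "c N = f N ?M (c ?M)" using ccomp[OF NI MI] sub unfolding leq_def by simp
            also have "\<dots> = N #> g" using g(2) absorb[OF NI MI sub g(1)] by simp
            finally show ?thesis using rcos_self[OF g(1) IN(2)[OF NI]] by simp
          qed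
          then show ?thesis using I0 by blast
        qed
      qed
      then obtain g where g: "\<And>N. N \<in> I \<Longrightarrow> g \<in> c N" by blast
      have gc: "g \<in> carrier G"
      proof -
        obtain h where h: "h \<in> carrier G" "c (carrier G) = carrier G #> h" using rc cN[OF carrI] by blast
        have "g \<in> carrier G #> h" using g[OF carrI] h(2) by simp
        then show ?thesis using r_coset_subset_G[OF _ h(1)] by blast
      qed
      have "c = \<phi> g"
      proof (rule PiE_ext[OF cP phiPi[OF gc]])
        fix N assume N: "N \<in> I"
        obtain h where h: "h \<in> carrier G" "c N = N #> h" using rc cN[OF N] by blast
        have "g \<in> N #> h" using g[OF N] h(2) by simp
        then have "N #> h = N #> g" by (rule repr_independence[OF _ h(1) IN(2)[OF N]])
        then show "c N = \<phi> g N" using h(2) phiN[OF N] by simp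
      qed
      then show "c \<in> \<phi> ` carrier G" using gc by blast
    qed
  qed
  have piso: "\<phi> \<in> iso G ?L"
    unfolding iso_def bij_betw_def using phom pinj psurj carL by simp
  let ?P = "product_topology (\<lambda>i. discrete_topology (carrier (Gs i))) I"
  have topP: "topspace ?P = PiE I (\<lambda>i. carrier (Gs i))" by (simp add: topspace_product_topology)
  have topL: "topspace (inv_lim_topology I leq Gs f) = inv_lim_carrier I leq Gs f"
    unfolding inv_lim_topology_def using topP unfolding inv_lim_carrier_def by auto
  have contP: "continuous_map T ?P \<phi>"
    unfolding continuous_map_componentwise
  proof (intro conjI ballI)
    show "\<phi> ` topspace T \<subseteq> extensional I" unfolding \<phi>_def by auto
    fix N assume N: "N \<in> I"
    show "continuous_map T (discrete_topology (carrier (Gs N))) (\<lambda>x. \<phi> x N)"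
      unfolding continuous_map_def
    proof (intro conjI allI impI)
      show "(\<lambda>x. \<phi> x N) \<in> topspace T \<rightarrow> topspace (discrete_topology (carrier (Gs N)))"
        using phiN[OF N] carGs rcosetsI[OF IN(4)[OF N]] topsp by auto
      fix U assume "openin (discrete_topology (carrier (Gs N))) U"
      have "openin T {g\<in>carrier G. (\<lambda>C. C \<in> U) (N #> g)}" by (rule coset_pred_open[OF IN(2,3)[OF N]])
      moreover have "{x \<in> topspace T. \<phi> x N \<in> U} = {g\<in>carrier G. (\<lambda>C. C \<in> U) (N #> g)}"
        using phiN[OF N] topsp by auto
      ultimately show "openin T {x \<in> topspace T. \<phi> x N \<in> U}" by simp
    qed
  qed
  have contL: "continuous_map T (inv_lim_topology I leq Gs f) \<phi>"
    unfolding inv_lim_topology_def continuous_map_in_subtopology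
    using contP phic topsp by auto
  have hausL: "Hausdorff_space (inv_lim_topology I leq Gs f)"
    unfolding inv_lim_topology_def
    by (rule Hausdorff_space_subtopology) (simp add: Hausdorff_space_product_topology Hausdorff_space_discrete_topology)
  have clL: "closed_map T (inv_lim_topology I leq Gs f) \<phi>"
    by (rule continuous_imp_closed_map[OF contL compact hausL])
  have hom: "homeomorphic_map T (inv_lim_topology I leq Gs f) \<phi>"
    by (rule bijective_closed_imp_homeomorphic_map[OF contL clL]) (use topL psurj pinj topsp in auto)
  show ?thesis
    unfolding inv_lim_of_finite_C_groups_def
    apply (rule exI[of _ I], rule exI[of _ leq], rule exI[of _ Gs], rule exI[of _ f])
    using sys fin piso hom by blast
qed

end

context tgrp begin

lemma invlim_P1:
  assumes "inv_lim_of_finite_C_groups G T TYPE('i) TYPE('b)"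
  shows "\<forall>H. subgroup H G \<and> closedin T H \<longrightarrow> (\<exists>K. perm_complement G H K \<and> closedin T K)"
proof -
  obtain I :: "'i set" and leq and Gs :: "'i \<Rightarrow> 'b monoid" and f \<phi> where
    sys: "inverse_system I leq Gs f" and fc: "\<forall>i\<in>I. finite (carrier (Gs i)) \<and> C_group (Gs i)"
    and iso: "\<phi> \<in> iso G (inv_lim_group I leq Gs f)"
    and hm: "homeomorphic_map T (inv_lim_topology I leq Gs f) \<phi>"
    using assms unfolding inv_lim_of_finite_C_groups_def by blast
  have CG: "\<forall>i\<in>I. C_group (Gs i)" using fc by blast
  have sep: "\<And>x. x \<in> carrier G \<Longrightarrow> x \<noteq> \<one> \<Longrightarrow>
     \<exists>(Q::'b monoid) \<psi>. C_group Q \<and> \<psi> \<in> hom G Q \<and> \<psi> x \<noteq> \<one>\<^bsub>Q\<^esub> \<and>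
        (\<forall>S. closedin T {g\<in>carrier G. \<psi> g \<in> S})"
    by (rule invlim_sep[OF sys CG iso hm])
  show ?thesis using core_lemma[OF sep] by blast
qed

lemma allQ_P1:
  assumes allC: "\<forall>N. N \<lhd> G \<and> openin T N \<longrightarrow> C_group (G Mod N)"
  shows "\<forall>H. subgroup H G \<and> closedin T H \<longrightarrow> (\<exists>K. perm_complement G H K \<and> closedin T K)"
proof -
  have sep: "\<And>x. x \<in> carrier G \<Longrightarrow> x \<noteq> \<one> \<Longrightarrow>
     \<exists>(Q::'a set monoid) \<psi>. C_group Q \<and> \<psi> \<in> hom G Q \<and> \<psi> x \<noteq> \<one>\<^bsub>Q\<^esub> \<and>
        (\<forall>S. closedin T {g\<in>carrier G. \<psi> g \<in> S})"
    by (rule quot_sep[OF allC])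
  show ?thesis using core_lemma[OF sep] by blast
qed

end

theorem theoremA:
  fixes G :: "'a monoid" and T :: "'a topology"
  assumes "profinite_group G T"
  defines "P1 \<equiv> (\<forall>H. subgroup H G \<and> closedin T H \<longrightarrow>
                     (\<exists>K. perm_complement G H K \<and> closedin T K))"
      and "P2 \<equiv> (\<forall>H. subgroup H G \<and> closedin T H \<longrightarrow> (\<exists>K. perm_complement G H K))"
      and "P3 \<equiv> (\<forall>H. subgroup H G \<and> openin T H \<longrightarrow> (\<exists>K. perm_complement G H K))"
      and "P4 \<equiv> (\<forall>H. subgroup H G \<and> openin T H \<longrightarrow>
                     (\<exists>K. perm_complement G H K \<and> closedin T K))"
      and "P5 \<equiv> (\<forall>\<N>. ((\<forall>N\<in>\<N>. N \<lhd> G \<and> openin T N) \<and>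
                       (\<forall>U. openin T U \<and> \<one>\<^bsub>G\<^esub> \<in> U \<longrightarrow> (\<exists>N\<in>\<N>. N \<subseteq> U)))
                   \<longrightarrow> (\<forall>N\<in>\<N>. C_group (G Mod N)))"
  shows "(P1 \<longleftrightarrow> P2) \<and> (P2 \<longleftrightarrow> P3) \<and> (P3 \<longleftrightarrow> P4) \<and> (P4 \<longleftrightarrow> P5) \<and>
         (P5 \<longleftrightarrow> inv_lim_of_finite_C_groups G T TYPE('a set) TYPE('a set)) \<and>
         (inv_lim_of_finite_C_groups G T TYPE('i) TYPE('b) \<longrightarrow> P1)"
proof -
  have grp: "group G" using assms(1) by (simp add: profinite_group_def topological_group_def)
  interpret tgrp G T unfolding tgrp_def tgrp_axioms_def using grp assms(1) by simp
  let ?Q = "\<forall>N. N \<lhd> G \<and> openin T N \<longrightarrow> C_group (G Mod N)"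
  have "P1 \<Longrightarrow> P2" unfolding P1_def P2_def by blast
  have "P1 \<Longrightarrow> P4" unfolding P1_def P4_def using open_subgroup_closed by blast
  have "P4 \<Longrightarrow> P3" unfolding P3_def P4_def by blast
  have "P2 \<Longrightarrow> P3" unfolding P2_def P3_def using open_subgroup_closed by blast
  have "P3 \<Longrightarrow> ?Q" unfolding P3_def using P3_quot by blast
  have "?Q \<Longrightarrow> P1" unfolding P1_def using allQ_P1 by blast
  have "?Q \<Longrightarrow> P5" unfolding P5_def by blast
  have "P5 \<Longrightarrow> ?Q" unfolding P5_def using all_quot_C by blast
  have "?Q \<Longrightarrow> inv_lim_of_finite_C_groups G T TYPE('a set) TYPE('a set)" using invlim_construct by blast
  have "inv_lim_of_finite_C_groups G T TYPE('a set) TYPE('a set) \<Longrightarrow> P1"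
    unfolding P1_def using invlim_P1 by blast
  have "inv_lim_of_finite_C_groups G T TYPE('i) TYPE('b) \<Longrightarrow> P1"
    unfolding P1_def using invlim_P1 by blast
  show ?thesis using \<open>P1 \<Longrightarrow> P2\<close> \<open>P1 \<Longrightarrow> P4\<close> \<open>P4 \<Longrightarrow> P3\<close> \<open>P2 \<Longrightarrow> P3\<close> \<open>P3 \<Longrightarrow> ?Q\<close> \<open>?Q \<Longrightarrow> P1\<close>
    \<open>?Q \<Longrightarrow> P5\<close> \<open>P5 \<Longrightarrow> ?Q\<close>
    \<open>?Q \<Longrightarrow> inv_lim_of_finite_C_groups G T TYPE('a set) TYPE('a set)\<close>
    \<open>inv_lim_of_finite_C_groups G T TYPE('a set) TYPE('a set) \<Longrightarrow> P1\<close>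
    \<open>inv_lim_of_finite_C_groups G T TYPE('i) TYPE('b) \<Longrightarrow> P1\<close>
    by blast
qed

end
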